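(* Let $m\ge 2$ and let $\alpha_1,\dots,\alpha_m\in\mathbb{R}$ be algebraically independent over $\mathbb{Q}$; let $K=\mathbb{Q}(\alpha_1,\dots,\alpha_m)$ and $K^+=\{x\in K: x>0\}$. Then for every integer $n\ge 2$ there exist infinitely many different ways to write $K^+$ as a union of $n$ pairwise disjoint nonempty subsets, each closed under addition and multiplication. *)

theory Defs
  imports Complex_Main
begin

text \<open>A polynomial is given as a finite set S of exponent vectors (functions nat => nat supported
  in {..<m}) together with rational coefficients c.\<close>
definition alg_indep_Q :: "nat \<Rightarrow> (nat \<Rightarrow> real) \<Rightarrow> bool" where
  "alg_indep_Q m \<alpha> \<longleftrightarrow>
     (\<forall>S c. finite S \<longrightarrow> S \<subseteq> {e :: nat \<Rightarrow> nat. \<forall>i\<ge>m. e i = 0} \<longrightarrow>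
        (\<Sum>e\<in>S. of_rat (c e) * (\<Prod>i<m. \<alpha> i ^ e i)) = 0 \<longrightarrow>
        (\<forall>e\<in>S. c e = (0::rat)))"

definition is_subfield :: "real set \<Rightarrow> bool" where
  "is_subfield F \<longleftrightarrow> 0 \<in> F \<and> 1 \<in> F \<and>
     (\<forall>x\<in>F. \<forall>y\<in>F. x + y \<in> F \<and> x - y \<in> F \<and> x * y \<in> F) \<and>
     (\<forall>x\<in>F. x \<noteq> 0 \<longrightarrow> inverse x \<in> F)"

definition gen_field :: "nat \<Rightarrow> (nat \<Rightarrow> real) \<Rightarrow> real set" where
  "gen_field m \<alpha> = \<Inter>{F. is_subfield F \<and> (\<forall>i<m. \<alpha> i \<in> F)}"

definition closed_add_mult :: "real set \<Rightarrow> bool" where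
  "closed_add_mult A \<longleftrightarrow> (\<forall>x\<in>A. \<forall>y\<in>A. x + y \<in> A \<and> x * y \<in> A)"

text \<open>Ways to write X as a union of n pairwise disjoint nonempty subsets, each closed under
  addition and multiplication (unordered: a way is the set of its n parts).\<close>
definition semiring_partitions :: "nat \<Rightarrow> real set \<Rightarrow> real set set set" where
  "semiring_partitions n X = {P. finite P \<and> card P = n \<and> \<Union>P = X \<and>
      (\<forall>A\<in>P. A \<noteq> {} \<and> closed_add_mult A) \<and>
      (\<forall>A\<in>P. \<forall>B\<in>P. A \<noteq> B \<longrightarrow> A \<inter> B = {})}"

end

theory Submission
  imports Defs "HOL-Computational_Algebra.Polynomial"
begin


datatype pexpr = PC int | PV nat | PAdd pexpr pexpr | PMul pexpr pexpr | PNeg pexpr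

primrec ev :: "(nat \<Rightarrow> 'a::comm_ring_1) \<Rightarrow> pexpr \<Rightarrow> 'a" where
  "ev x (PC c) = of_int c"
| "ev x (PV i) = x i"
| "ev x (PAdd a b) = ev x a + ev x b"
| "ev x (PMul a b) = ev x a * ev x b"
| "ev x (PNeg a) = - ev x a"

primrec vb :: "nat \<Rightarrow> pexpr \<Rightarrow> bool" where
  "vb m (PC c) = True"
| "vb m (PV i) = (i < m)"
| "vb m (PAdd a b) = (vb m a \<and> vb m b)"
| "vb m (PMul a b) = (vb m a \<and> vb m b)"
| "vb m (PNeg a) = vb m a"

definition dl :: "nat \<Rightarrow> nat \<Rightarrow> nat" where "dl i = (\<lambda>j. if j = i then 1 else 0)"

definition addv :: "(nat \<Rightarrow> nat) \<times> (nat \<Rightarrow> nat) \<Rightarrow> nat \<Rightarrow> nat" where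
  "addv p = (\<lambda>i. fst p i + snd p i)"

primrec sp :: "pexpr \<Rightarrow> (nat \<Rightarrow> nat) set" where
  "sp (PC c) = {\<lambda>_. 0}"
| "sp (PV i) = {dl i}"
| "sp (PAdd a b) = sp a \<union> sp b"
| "sp (PMul a b) = addv ` (sp a \<times> sp b)"
| "sp (PNeg a) = sp a"

primrec nf :: "pexpr \<Rightarrow> (nat \<Rightarrow> nat) \<Rightarrow> int" where
  "nf (PC c) = (\<lambda>s. if s = (\<lambda>_. 0) then c else 0)"
| "nf (PV i) = (\<lambda>s. if s = dl i then 1 else 0)"
| "nf (PAdd a b) = (\<lambda>s. nf a s + nf b s)"
| "nf (PMul a b) = (\<lambda>u. \<Sum>p\<in>{p \<in> sp a \<times> sp b. addv p = u}. nf a (fst p) * nf b (snd p))"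
| "nf (PNeg a) = (\<lambda>s. - nf a s)"

lemma finite_sp: "finite (sp e)"
  by (induction e) auto

lemma sp_supp: "vb m e \<Longrightarrow> sp e \<subseteq> {s. \<forall>i\<ge>m. s i = 0}"
proof (induction e)
  case (PMul a b)
  then show ?case by (fastforce simp: addv_def)
qed (auto simp: dl_def)

lemma nf_out: "s \<notin> sp e \<Longrightarrow> nf e s = 0"
proof (induction e arbitrary: s)
  case (PMul a b)
  then have "{p \<in> sp a \<times> sp b. addv p = s} = {}" by auto
  then show ?case by (simp only: nf.simps sum.empty)
next
  case (PAdd a b) then show ?case by simp
next
  case (PNeg a) then show ?case by simp
next
  case (PC c) then show ?case by simp
next
  case (PV i) then show ?case by simp
qed

definition mon :: "nat \<Rightarrow> (nat \<Rightarrow> 'a::comm_ring_1) \<Rightarrow> (nat \<Rightarrow> nat) \<Rightarrow> 'a" where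
  "mon m x s = (\<Prod>i<m. x i ^ s i)"

lemma mon_add: "mon m x (addv p) = mon m x (fst p) * mon m x (snd p)"
  by (simp add: mon_def addv_def power_add prod.distrib)

lemma mon_dl: "i < m \<Longrightarrow> mon m x (dl i) = x i"
proof -
  assume "i < m"
  have "(\<Prod>j<m. x j ^ dl i j) = (\<Prod>j<m. if j = i then x j else 1)"
    by (rule prod.cong) (auto simp: dl_def)
  also have "\<dots> = x i" using \<open>i < m\<close> by (simp add: prod.delta)
  finally show ?thesis by (simp add: mon_def)
qed

lemma sum_union_nf:
  assumes "finite A" "finite B" "sp e \<subseteq> A \<union> B"
  shows "(\<Sum>s\<in>A \<union> B. of_int (nf e s) * mon m x s) = (\<Sum>s\<in>sp e. of_int (nf e s) * mon m x s)"
  using assms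
  by (intro sum.mono_neutral_right) (auto simp: nf_out)

lemma ev_nf: "vb m e \<Longrightarrow> ev x e = (\<Sum>s\<in>sp e. of_int (nf e s) * mon m x s)"
proof (induction e)
  case (PC c)
  then show ?case by (simp add: mon_def)
next
  case (PV i)
  then show ?case by (simp add: mon_dl)
next
  case (PAdd a b)
  have fa: "finite (sp a)" "finite (sp b)" by (auto simp: finite_sp)
  have "ev x (PAdd a b) = (\<Sum>s\<in>sp a. of_int (nf a s) * mon m x s) + (\<Sum>s\<in>sp b. of_int (nf b s) * mon m x s)"
    using PAdd by simp
  also have "\<dots> = (\<Sum>s\<in>sp a \<union> sp b. of_int (nf a s) * mon m x s) + (\<Sum>s\<in>sp a \<union> sp b. of_int (nf b s) * mon m x s)"
    using fa by (simp add: sum_union_nf)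
  also have "\<dots> = (\<Sum>s\<in>sp (PAdd a b). of_int (nf (PAdd a b) s) * mon m x s)"
    by (simp add: sum.distrib distrib_right)
  finally show ?case .
next
  case (PNeg a)
  then show ?case by (simp add: sum_negf)
next
  case (PMul a b)
  have fa: "finite (sp a)" "finite (sp b)" by (auto simp: finite_sp)
  let ?G = "\<lambda>p. of_int (nf a (fst p) * nf b (snd p)) * mon m x (addv p)"
  have "ev x (PMul a b) = (\<Sum>s\<in>sp a. of_int (nf a s) * mon m x s) * (\<Sum>t\<in>sp b. of_int (nf b t) * mon m x t)"
    using PMul by simp
  also have "\<dots> = (\<Sum>s\<in>sp a. \<Sum>t\<in>sp b. (of_int (nf a s) * mon m x s) * (of_int (nf b t) * mon m x t))"
    by (simp add: sum_product)
  also have "\<dots> = (\<Sum>s\<in>sp a. \<Sum>t\<in>sp b. ?G (s,t))"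
    by (intro sum.cong refl) (simp add: mon_add mult_ac)
  also have "\<dots> = (\<Sum>p\<in>sp a \<times> sp b. ?G p)"
    by (subst sum.cartesian_product) (simp add: case_prod_beta')
  also have "\<dots> = (\<Sum>u\<in>addv ` (sp a \<times> sp b). \<Sum>p\<in>{p \<in> sp a \<times> sp b. addv p = u}. ?G p)"
    using fa by (intro sum.image_gen) auto
  also have "\<dots> = (\<Sum>u\<in>addv ` (sp a \<times> sp b). of_int (nf (PMul a b) u) * mon m x u)"
  proof (rule sum.cong)
    fix u assume "u \<in> addv ` (sp a \<times> sp b)"
    have "(\<Sum>p\<in>{p \<in> sp a \<times> sp b. addv p = u}. ?G p)
        = (\<Sum>p\<in>{p \<in> sp a \<times> sp b. addv p = u}. of_int (nf a (fst p) * nf b (snd p)) * mon m x u)"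
      by (rule sum.cong) auto
    also have "\<dots> = of_int (nf (PMul a b) u) * mon m x u"
      by (simp add: sum_distrib_right)
    finally show "(\<Sum>p\<in>{p \<in> sp a \<times> sp b. addv p = u}. ?G p) = of_int (nf (PMul a b) u) * mon m x u" .
  qed simp
  finally show ?case by simp
qed

lemma ev_zero:
  assumes ai: "alg_indep_Q m \<alpha>" and v: "vb m e" and z: "ev \<alpha> e = 0"
  shows "ev x e = 0"
proof -
  have "(\<Sum>s\<in>sp e. of_rat (of_int (nf e s)) * (\<Prod>i<m. \<alpha> i ^ s i)) = 0"
    using z ev_nf[OF v, of \<alpha>] by (simp add: mon_def)
  moreover have H: "\<forall>S c. finite S \<longrightarrow> S \<subseteq> {e :: nat \<Rightarrow> nat. \<forall>i\<ge>m. e i = 0} \<longrightarrow>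
        (\<Sum>e\<in>S. of_rat (c e) * (\<Prod>i<m. \<alpha> i ^ e i)) = 0 \<longrightarrow>
        (\<forall>e\<in>S. c e = (0::rat))" using ai unfolding alg_indep_Q_def .
  ultimately have "\<forall>s\<in>sp e. (of_int (nf e s) :: rat) = 0"
    using H[rule_format, of "sp e" "\<lambda>s. of_int (nf e s)"] sp_supp[OF v] finite_sp by simp
  then show ?thesis using ev_nf[OF v, of x] by simp
qed


definition rep :: "nat \<Rightarrow> (nat \<Rightarrow> real) \<Rightarrow> real \<Rightarrow> pexpr \<Rightarrow> pexpr \<Rightarrow> bool" where
  "rep m \<alpha> x P Q \<longleftrightarrow> vb m P \<and> vb m Q \<and> ev \<alpha> Q \<noteq> 0 \<and> x = ev \<alpha> P / ev \<alpha> Q"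

lemma rep_add: "rep m \<alpha> x P Q \<Longrightarrow> rep m \<alpha> y P' Q' \<Longrightarrow>
   rep m \<alpha> (x + y) (PAdd (PMul P Q') (PMul P' Q)) (PMul Q Q')"
  by (auto simp: rep_def field_simps)

lemma rep_diff: "rep m \<alpha> x P Q \<Longrightarrow> rep m \<alpha> y P' Q' \<Longrightarrow>
   rep m \<alpha> (x - y) (PAdd (PMul P Q') (PNeg (PMul P' Q))) (PMul Q Q')"
  by (auto simp: rep_def field_simps)

lemma rep_mult: "rep m \<alpha> x P Q \<Longrightarrow> rep m \<alpha> y P' Q' \<Longrightarrow>
   rep m \<alpha> (x * y) (PMul P P') (PMul Q Q')"
  by (auto simp: rep_def)

lemma rep_inv: "rep m \<alpha> x P Q \<Longrightarrow> x \<noteq> 0 \<Longrightarrow> rep m \<alpha> (inverse x) Q P"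
  by (auto simp: rep_def)

lemma rep_const: "rep m \<alpha> (of_int c) (PC c) (PC 1)"
  by (auto simp: rep_def)

lemma rep_var: "i < m \<Longrightarrow> rep m \<alpha> (\<alpha> i) (PV i) (PC 1)"
  by (auto simp: rep_def)

lemma frac_subfield: "is_subfield {x. \<exists>P Q. rep m \<alpha> x P Q}"
  unfolding is_subfield_def
proof (intro conjI ballI)
  show "0 \<in> {x. \<exists>P Q. rep m \<alpha> x P Q}" using rep_const[of m \<alpha> 0] by auto
  show "1 \<in> {x. \<exists>P Q. rep m \<alpha> x P Q}" using rep_const[of m \<alpha> 1] by auto
  fix x y assume "x \<in> {x. \<exists>P Q. rep m \<alpha> x P Q}" "y \<in> {x. \<exists>P Q. rep m \<alpha> x P Q}"
  then obtain P Q P' Q' where r: "rep m \<alpha> x P Q" "rep m \<alpha> y P' Q'" by auto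
  show "x + y \<in> {x. \<exists>P Q. rep m \<alpha> x P Q}" using rep_add[OF r] by blast
  show "x - y \<in> {x. \<exists>P Q. rep m \<alpha> x P Q}" using rep_diff[OF r] by blast
  show "x * y \<in> {x. \<exists>P Q. rep m \<alpha> x P Q}" using rep_mult[OF r] by blast
next
  fix x assume "x \<in> {x. \<exists>P Q. rep m \<alpha> x P Q}"
  then obtain P Q where r: "rep m \<alpha> x P Q" by auto
  show "x \<noteq> 0 \<longrightarrow> inverse x \<in> {x. \<exists>P Q. rep m \<alpha> x P Q}" using rep_inv[OF r] by blast
qed

lemma gen_field_sub: "is_subfield F \<Longrightarrow> (\<forall>i<m. \<alpha> i \<in> F) \<Longrightarrow> gen_field m \<alpha> \<subseteq> F"
  unfolding gen_field_def by auto

lemma gen_field_rep: "x \<in> gen_field m \<alpha> \<Longrightarrow> \<exists>P Q. rep m \<alpha> x P Q"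
  using gen_field_sub[OF frac_subfield, of m \<alpha>] rep_var[of _ m \<alpha>] by blast

lemma gen_field_subfield: "is_subfield (gen_field m \<alpha>)"
  unfolding gen_field_def is_subfield_def by auto

lemma gen_field_var: "i < m \<Longrightarrow> \<alpha> i \<in> gen_field m \<alpha>"
  unfolding gen_field_def by auto

definition pt :: "(nat \<Rightarrow> real) \<Rightarrow> nat \<Rightarrow> nat \<Rightarrow> real poly" where
  "pt \<alpha> j i = [:\<alpha> i, if i = j then 1 else 0:]"

definition der :: "(nat \<Rightarrow> real) \<Rightarrow> nat \<Rightarrow> pexpr \<Rightarrow> real" where
  "der \<alpha> j e = coeff (ev (pt \<alpha> j) e) 1"

lemma coeff0_ev: "coeff (ev (pt \<alpha> j) e) 0 = ev \<alpha> e"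
  by (induction e) (auto simp: pt_def coeff_mult of_int_poly)

lemma der_simps:
  "der \<alpha> j (PC c) = 0"
  "der \<alpha> j (PV i) = (if i = j then 1 else 0)"
  "der \<alpha> j (PAdd a b) = der \<alpha> j a + der \<alpha> j b"
  "der \<alpha> j (PNeg a) = - der \<alpha> j a"
  "der \<alpha> j (PMul a b) = ev \<alpha> a * der \<alpha> j b + der \<alpha> j a * ev \<alpha> b"
  by (auto simp: der_def pt_def of_int_poly coeff_mult coeff0_ev)

lemma der_zero: "alg_indep_Q m \<alpha> \<Longrightarrow> vb m e \<Longrightarrow> ev \<alpha> e = 0 \<Longrightarrow> der \<alpha> j e = 0"
  using ev_zero[of m \<alpha> e "pt \<alpha> j"] by (simp add: der_def)


definition dq :: "(nat \<Rightarrow> real) \<Rightarrow> nat \<Rightarrow> pexpr \<Rightarrow> pexpr \<Rightarrow> real" where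
  "dq \<alpha> j P Q = (der \<alpha> j P * ev \<alpha> Q - ev \<alpha> P * der \<alpha> j Q) / (ev \<alpha> Q)^2"

lemma dq_welldef:
  assumes ai: "alg_indep_Q m \<alpha>" and r1: "rep m \<alpha> x P Q" and r2: "rep m \<alpha> x P' Q'"
  shows "dq \<alpha> j P Q = dq \<alpha> j P' Q'"
proof -
  let ?e = "PAdd (PMul P Q') (PNeg (PMul P' Q))"
  have q: "ev \<alpha> Q \<noteq> 0" "ev \<alpha> Q' \<noteq> 0" using r1 r2 by (auto simp: rep_def)
  have p: "ev \<alpha> P = x * ev \<alpha> Q" "ev \<alpha> P' = x * ev \<alpha> Q'" using r1 r2 q by (auto simp: rep_def field_simps)
  have v: "vb m ?e" using r1 r2 by (auto simp: rep_def)
  have "ev \<alpha> ?e = 0" using p by simp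
  then have "der \<alpha> j ?e = 0" using der_zero[OF ai v] by blast
  then have rel: "ev \<alpha> P * der \<alpha> j Q' + der \<alpha> j P * ev \<alpha> Q' = ev \<alpha> P' * der \<alpha> j Q + der \<alpha> j P' * ev \<alpha> Q"
    by (simp add: der_simps)
  define a where "a = der \<alpha> j P" define b where "b = der \<alpha> j Q"
  define a' where "a' = der \<alpha> j P'" define b' where "b' = der \<alpha> j Q'"
  define q1 where "q1 = ev \<alpha> Q" define q2 where "q2 = ev \<alpha> Q'"
  have rel2: "x * q1 * b' + a * q2 = x * q2 * b + a' * q1"
    using rel p unfolding a_def b_def a'_def b'_def q1_def q2_def by simp
  have nz: "q1 \<noteq> 0" "q2 \<noteq> 0" using q unfolding q1_def q2_def by auto
  have "(a * q1 - x * q1 * b) / q1^2 = (a' * q2 - x * q2 * b') / q2^2"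
  proof -
    have "(a * q1 - x * q1 * b) / q1^2 = (a - x * b) / q1" using nz by (simp add: power2_eq_square field_simps)
    moreover have "(a' * q2 - x * q2 * b') / q2^2 = (a' - x * b') / q2" using nz by (simp add: power2_eq_square field_simps)
    moreover have "(a - x * b) / q1 = (a' - x * b') / q2"
      using nz rel2 by (simp add: field_simps)
    ultimately show ?thesis by simp
  qed
  then show ?thesis unfolding dq_def using p unfolding a_def b_def a'_def b'_def q1_def q2_def by simp
qed

definition D :: "nat \<Rightarrow> (nat \<Rightarrow> real) \<Rightarrow> nat \<Rightarrow> real \<Rightarrow> real" where
  "D m \<alpha> j x = (let PQ = (SOME PQ. rep m \<alpha> x (fst PQ) (snd PQ)) in dq \<alpha> j (fst PQ) (snd PQ))"

lemma D_rep:
  assumes ai: "alg_indep_Q m \<alpha>" and r: "rep m \<alpha> x P Q"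
  shows "D m \<alpha> j x = dq \<alpha> j P Q"
proof -
  have "\<exists>PQ. rep m \<alpha> x (fst PQ) (snd PQ)" using r by (intro exI[of _ "(P,Q)"]) simp
  then have "rep m \<alpha> x (fst (SOME PQ. rep m \<alpha> x (fst PQ) (snd PQ))) (snd (SOME PQ. rep m \<alpha> x (fst PQ) (snd PQ)))"
    by (rule someI_ex)
  then show ?thesis unfolding D_def Let_def using dq_welldef[OF ai _ r] by blast
qed

lemma alg_add:
  fixes a b a' b' p1 q1 p2 q2 :: real
  assumes "q1 \<noteq> 0" "q2 \<noteq> 0"
  shows "((p1 * b' + a * q2 + (p2 * b + a' * q1)) * (q1 * q2) - (p1 * q2 + p2 * q1) * (q1 * b' + b * q2)) / (q1 * q2)^2
     = (a * q1 - p1 * b) / q1^2 + (a' * q2 - p2 * b') / q2^2"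
  using assms by (simp add: field_simps power2_eq_square)

lemma alg_mult:
  fixes a b a' b' p1 q1 p2 q2 :: real
  assumes "q1 \<noteq> 0" "q2 \<noteq> 0"
  shows "((p1 * a' + a * p2) * (q1 * q2) - (p1 * p2) * (q1 * b' + b * q2)) / (q1 * q2)^2
     = (p1 / q1) * ((a' * q2 - p2 * b') / q2^2) + (p2 / q2) * ((a * q1 - p1 * b) / q1^2)"
  using assms by (simp add: field_simps power2_eq_square)

lemma D_add:
  assumes ai: "alg_indep_Q m \<alpha>" and x: "x \<in> gen_field m \<alpha>" and y: "y \<in> gen_field m \<alpha>"
  shows "D m \<alpha> j (x + y) = D m \<alpha> j x + D m \<alpha> j y"
proof -
  obtain P Q P' Q' where r: "rep m \<alpha> x P Q" "rep m \<alpha> y P' Q'" using gen_field_rep x y by blast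
  have nz: "ev \<alpha> Q \<noteq> 0" "ev \<alpha> Q' \<noteq> 0" using r by (auto simp: rep_def)
  have "D m \<alpha> j (x + y) = dq \<alpha> j (PAdd (PMul P Q') (PMul P' Q)) (PMul Q Q')" by (rule D_rep[OF ai rep_add[OF r]])
  also have "\<dots> = dq \<alpha> j P Q + dq \<alpha> j P' Q'"
    unfolding dq_def der_simps ev.simps by (rule alg_add[OF nz])
  finally show ?thesis using D_rep[OF ai r(1)] D_rep[OF ai r(2)] by simp
qed

lemma D_mult:
  assumes ai: "alg_indep_Q m \<alpha>" and x: "x \<in> gen_field m \<alpha>" and y: "y \<in> gen_field m \<alpha>"
  shows "D m \<alpha> j (x * y) = x * D m \<alpha> j y + y * D m \<alpha> j x"
proof -
  obtain P Q P' Q' where r: "rep m \<alpha> x P Q" "rep m \<alpha> y P' Q'" using gen_field_rep x y by blast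
  have nz: "ev \<alpha> Q \<noteq> 0" "ev \<alpha> Q' \<noteq> 0" using r by (auto simp: rep_def)
  have xy: "x = ev \<alpha> P / ev \<alpha> Q" "y = ev \<alpha> P' / ev \<alpha> Q'" using r by (auto simp: rep_def)
  have "D m \<alpha> j (x * y) = dq \<alpha> j (PMul P P') (PMul Q Q')" by (rule D_rep[OF ai rep_mult[OF r]])
  also have "\<dots> = x * dq \<alpha> j P' Q' + y * dq \<alpha> j P Q"
    unfolding dq_def der_simps ev.simps xy by (rule alg_mult[OF nz])
  finally show ?thesis using D_rep[OF ai r(1)] D_rep[OF ai r(2)] by simp
qed

lemma D_var:
  assumes ai: "alg_indep_Q m \<alpha>" and i: "i < m"
  shows "D m \<alpha> j (\<alpha> i) = (if i = j then 1 else 0)"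
  using D_rep[OF ai rep_var[OF i]] by (simp add: dq_def der_simps)

lemma D_one:
  assumes ai: "alg_indep_Q m \<alpha>"
  shows "D m \<alpha> j 1 = 0"
  using D_rep[OF ai rep_const[of m \<alpha> 1]] by (simp add: dq_def der_simps)



definition inC :: "nat \<Rightarrow> nat \<Rightarrow> real \<Rightarrow> real \<Rightarrow> bool" where
  "inC n j a b \<longleftrightarrow> (if j = 0 then a < 0 \<or> (a = 0 \<and> b \<le> 0)
     else (0 < a \<or> (a = 0 \<and> 0 < b \<and> j = n - 1)) \<and> (2 \<le> j \<longrightarrow> (real j - 1) * a \<le> b)
          \<and> (j + 2 \<le> n \<longrightarrow> b < real j * a))"

lemma inC_comb:
  assumes h1: "inC n j a b" and h2: "inC n j a' b'" and s: "0 < s" and t: "0 < t"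
  shows "inC n j (s * a + t * a') (s * b + t * b')"
proof (cases "j = 0")
  case True
  then have c1: "a < 0 \<or> (a = 0 \<and> b \<le> 0)" and c2: "a' < 0 \<or> (a' = 0 \<and> b' \<le> 0)"
    using h1 h2 by (auto simp: inC_def)
  have "s * a \<le> 0" "t * a' \<le> 0" using c1 c2 s t by (auto simp: mult_nonneg_nonpos less_imp_le)
  consider "a < 0" | "a' < 0" | "a = 0 \<and> b \<le> 0 \<and> a' = 0 \<and> b' \<le> 0" using c1 c2 by auto
  then show ?thesis
  proof cases
    case 1
    then have "s * a < 0" using s by (simp add: mult_pos_neg)
    then show ?thesis using True \<open>t * a' \<le> 0\<close> by (simp add: inC_def)
  next
    case 2
    then have "t * a' < 0" using t by (simp add: mult_pos_neg)
    then show ?thesis using True \<open>s * a \<le> 0\<close> by (simp add: inC_def)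
  next
    case 3
    then have "s * b \<le> 0" "t * b' \<le> 0" using s t by (auto simp: mult_pos_neg mult_nonneg_nonpos)
    then show ?thesis using True 3 by (simp add: inC_def)
  qed
next
  case False
  then have c1: "0 < a \<or> (a = 0 \<and> 0 < b \<and> j = n - 1)" and c2: "0 < a' \<or> (a' = 0 \<and> 0 < b' \<and> j = n - 1)"
    and l1: "2 \<le> j \<longrightarrow> (real j - 1) * a \<le> b" and l2: "2 \<le> j \<longrightarrow> (real j - 1) * a' \<le> b'"
    and u1: "j + 2 \<le> n \<longrightarrow> b < real j * a" and u2: "j + 2 \<le> n \<longrightarrow> b' < real j * a'"
    using h1 h2 by (auto simp: inC_def)
  have sa: "0 \<le> s * a" "0 \<le> t * a'" using c1 c2 s t by auto
  have pos: "0 < s * a + t * a' \<or> (s * a + t * a' = 0 \<and> 0 < s * b + t * b' \<and> j = n - 1)"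
  proof (cases "0 < a \<or> 0 < a'")
    case True
    then show ?thesis using sa s t by (auto simp: add_pos_nonneg add_nonneg_pos)
  next
    case False
    then have "a = 0 \<and> 0 < b \<and> j = n - 1" "a' = 0 \<and> 0 < b' \<and> j = n - 1" using c1 c2 by auto
    then show ?thesis using s t by (auto simp: add_pos_pos)
  qed
  have low: "2 \<le> j \<longrightarrow> (real j - 1) * (s * a + t * a') \<le> s * b + t * b'"
  proof
    assume "2 \<le> j"
    then have "s * ((real j - 1) * a) \<le> s * b" "t * ((real j - 1) * a') \<le> t * b'"
      using l1 l2 s t by (auto intro: mult_left_mono)
    then show "(real j - 1) * (s * a + t * a') \<le> s * b + t * b'" by (simp add: algebra_simps)
  qed
  have up: "j + 2 \<le> n \<longrightarrow> s * b + t * b' < real j * (s * a + t * a')"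
  proof
    assume "j + 2 \<le> n"
    then have "s * b < s * (real j * a)" "t * b' < t * (real j * a')"
      using u1 u2 s t by auto
    then show "s * b + t * b' < real j * (s * a + t * a')" by (simp add: algebra_simps)
  qed
  show ?thesis using False pos low up by (simp add: inC_def)
qed

lemma inC_unique:
  assumes "j < n" "j' < n" "inC n j a b" "inC n j' a b"
  shows "j = j'"
proof (rule ccontr)
  assume ne: "j \<noteq> j'"
  show False
  proof (cases "j = 0 \<or> j' = 0")
    case True
    then show False using assms ne by (auto simp: inC_def)
  next
    case False
    then have a0: "0 < a \<or> (a = 0 \<and> 0 < b \<and> j = n - 1 \<and> j' = n - 1)" using assms by (auto simp: inC_def)
    then have apos: "0 < a" using ne by auto
    have "\<And>i i'. i < i' \<Longrightarrow> i' < n \<Longrightarrow> i \<noteq> 0 \<Longrightarrow> inC n i a b \<Longrightarrow> inC n i' a b \<Longrightarrow> False"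
    proof -
      fix i i' assume ii: "i < i'" "i' < n" "i \<noteq> 0" "inC n i a b" "inC n i' a b"
      then have "b < real i * a" by (auto simp: inC_def)
      moreover have "(real i' - 1) * a \<le> b" using ii by (auto simp: inC_def)
      moreover have "real i \<le> real i' - 1" using ii by auto
      then have "real i * a \<le> (real i' - 1) * a" using apos by (auto intro: mult_right_mono)
      ultimately show False by simp
    qed
    then show False using assms ne False by (metis linorder_neq_iff)
  qed
qed

lemma inC_exists:
  assumes n: "2 \<le> n"
  shows "\<exists>j<n. inC n j a b"
proof (cases "a < 0 \<or> (a = 0 \<and> b \<le> 0)")
  case True
  then show ?thesis using n by (intro exI[of _ 0]) (auto simp: inC_def)
next
  case False
  show ?thesis
  proof (cases "a = 0")
    case True
    then have "0 < b" using False by auto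
    then show ?thesis using n True by (intro exI[of _ "n - 1"]) (auto simp: inC_def)
  next
    case a0: False
    then have apos: "0 < a" using False by auto
    define r where "r = b / a"
    have br: "b = r * a" using apos by (simp add: r_def)
    show ?thesis
    proof (cases "r < 1")
      case True
      then have "r * a < 1 * a" using apos by (intro mult_strict_right_mono) auto
      then have "b < 1 * a" using br by simp
      then show ?thesis using n apos by (intro exI[of _ 1]) (auto simp: inC_def)
    next
      case r1: False
      define j where "j = min (n - 1) (nat \<lfloor>r\<rfloor> + 1)"
      have fl: "real (nat \<lfloor>r\<rfloor>) \<le> r" "r < real (nat \<lfloor>r\<rfloor>) + 1" using r1
        by auto
      have j1: "j \<ge> 1" "j < n" using n by (auto simp: j_def)
      have low: "2 \<le> j \<longrightarrow> (real j - 1) * a \<le> b"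
      proof
        assume "2 \<le> j"
        have "real j - 1 \<le> r" using fl by (auto simp: j_def)
        then show "(real j - 1) * a \<le> b" using br apos by (auto intro: mult_right_mono)
      qed
      have up: "j + 2 \<le> n \<longrightarrow> b < real j * a"
      proof
        assume "j + 2 \<le> n"
        then have "j = nat \<lfloor>r\<rfloor> + 1" by (auto simp: j_def)
        then have "real j = real (nat \<lfloor>r\<rfloor>) + 1" by simp
        then have "r < real j" using fl(2) by linarith
        then show "b < real j * a" using br apos by (auto intro: mult_strict_right_mono)
      qed
      show ?thesis using j1 apos low up by (intro exI[of _ j]) (auto simp: inC_def)
    qed
  qed
qed



definition lg :: "nat \<Rightarrow> (nat \<Rightarrow> real) \<Rightarrow> nat \<Rightarrow> real \<Rightarrow> real" where
  "lg m \<alpha> j x = \<alpha> j * D m \<alpha> j x / (2 * x)"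

lemma gf_mult: "x \<in> gen_field m \<alpha> \<Longrightarrow> y \<in> gen_field m \<alpha> \<Longrightarrow> x * y \<in> gen_field m \<alpha>"
  using gen_field_subfield[of m \<alpha>] unfolding is_subfield_def by blast
lemma gf_add: "x \<in> gen_field m \<alpha> \<Longrightarrow> y \<in> gen_field m \<alpha> \<Longrightarrow> x + y \<in> gen_field m \<alpha>"
  using gen_field_subfield[of m \<alpha>] unfolding is_subfield_def by blast
lemma gf_inv: "x \<in> gen_field m \<alpha> \<Longrightarrow> inverse x \<in> gen_field m \<alpha>"
  using gen_field_subfield[of m \<alpha>] unfolding is_subfield_def by (cases "x = 0") auto
lemma gf_one: "1 \<in> gen_field m \<alpha>"
  using gen_field_subfield[of m \<alpha>] unfolding is_subfield_def by blast
lemma gf_pow: "x \<in> gen_field m \<alpha> \<Longrightarrow> x ^ n \<in> gen_field m \<alpha>"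
  by (induction n) (auto simp: gf_one gf_mult)

context
  fixes m :: nat and \<alpha> :: "nat \<Rightarrow> real"
  assumes ai: "alg_indep_Q m \<alpha>"
begin

lemma lg_mult: "x \<in> gen_field m \<alpha> \<Longrightarrow> y \<in> gen_field m \<alpha> \<Longrightarrow> x \<noteq> 0 \<Longrightarrow> y \<noteq> 0 \<Longrightarrow>
  lg m \<alpha> j (x * y) = lg m \<alpha> j x + lg m \<alpha> j y"
  unfolding lg_def using D_mult[OF ai] by (simp add: field_simps)

lemma lg_add: "x \<in> gen_field m \<alpha> \<Longrightarrow> y \<in> gen_field m \<alpha> \<Longrightarrow> 0 < x \<Longrightarrow> 0 < y \<Longrightarrow>
  lg m \<alpha> j (x + y) = (x / (x + y)) * lg m \<alpha> j x + (y / (x + y)) * lg m \<alpha> j y"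
proof -
  assume h: "x \<in> gen_field m \<alpha>" "y \<in> gen_field m \<alpha>" "0 < x" "0 < y"
  have "lg m \<alpha> j (x + y) = \<alpha> j * (D m \<alpha> j x + D m \<alpha> j y) / (2 * (x + y))"
    unfolding lg_def using D_add[OF ai h(1,2)] by simp
  also have "\<dots> = (x / (x + y)) * (\<alpha> j * D m \<alpha> j x / (2 * x)) + (y / (x + y)) * (\<alpha> j * D m \<alpha> j y / (2 * y))"
  proof -
    have nz: "x + y \<noteq> 0" "x \<noteq> 0" "y \<noteq> 0" using h(3,4) by auto
    have e1: "(x / (x + y)) * (\<alpha> j * D m \<alpha> j x / (2 * x)) = \<alpha> j * D m \<alpha> j x / (2 * (x + y))"
      using nz(2) by simp
    have e2: "(y / (x + y)) * (\<alpha> j * D m \<alpha> j y / (2 * y)) = \<alpha> j * D m \<alpha> j y / (2 * (x + y))"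
      using nz(3) by simp
    show ?thesis unfolding e1 e2 by (simp add: add_divide_distrib distrib_left)
  qed
  finally show ?thesis unfolding lg_def .
qed

lemma lg_one: "lg m \<alpha> j 1 = 0"
  unfolding lg_def using D_one[OF ai] by simp

lemma lg_inv: "x \<in> gen_field m \<alpha> \<Longrightarrow> x \<noteq> 0 \<Longrightarrow> lg m \<alpha> j (inverse x) = - lg m \<alpha> j x"
  using lg_mult[of x "inverse x" j] lg_one gf_inv[of x m \<alpha>] by simp

lemma lg_pow: "x \<in> gen_field m \<alpha> \<Longrightarrow> x \<noteq> 0 \<Longrightarrow> lg m \<alpha> j (x ^ n) = real n * lg m \<alpha> j x"
proof (induction n)
  case 0 then show ?case using lg_one by simp
next
  case (Suc n)
  then show ?case using lg_mult[of x "x ^ n" j] gf_pow[of x m \<alpha> n] by (simp add: algebra_simps)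
qed

lemma alpha_nz: "i < m \<Longrightarrow> \<alpha> i \<noteq> 0"
proof
  assume i: "i < m" and z: "\<alpha> i = 0"
  have H: "\<forall>S c. finite S \<longrightarrow> S \<subseteq> {e :: nat \<Rightarrow> nat. \<forall>i\<ge>m. e i = 0} \<longrightarrow>
        (\<Sum>e\<in>S. of_rat (c e) * (\<Prod>i<m. \<alpha> i ^ e i)) = 0 \<longrightarrow>
        (\<forall>e\<in>S. c e = (0::rat))" using ai unfolding alg_indep_Q_def .
  have "{dl i} \<subseteq> {e :: nat \<Rightarrow> nat. \<forall>i\<ge>m. e i = 0}" using i by (auto simp: dl_def)
  moreover have "(\<Sum>e\<in>{dl i}. of_rat ((\<lambda>_. 1::rat) e) * (\<Prod>i<m. \<alpha> i ^ e i)) = 0"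
    using mon_dl[OF i, of \<alpha>] z by (simp add: mon_def)
  ultimately have "(\<lambda>_. 1::rat) (dl i) = 0" using H[rule_format, of "{dl i}" "\<lambda>_. 1"] by simp
  then show False by simp
qed

lemma lg_sq: "i < m \<Longrightarrow> lg m \<alpha> j (\<alpha> i * \<alpha> i) = (if i = j then 1 else 0)"
proof -
  assume i: "i < m"
  have "D m \<alpha> j (\<alpha> i * \<alpha> i) = 2 * \<alpha> i * (if i = j then 1 else 0)"
    using D_mult[OF ai gen_field_var[OF i] gen_field_var[OF i], of j] D_var[OF ai i, of j] by simp
  then show ?thesis using alpha_nz[OF i] unfolding lg_def by auto
qed

end



definition part :: "nat \<Rightarrow> (nat \<Rightarrow> real) \<Rightarrow> nat \<Rightarrow> nat \<Rightarrow> nat \<Rightarrow> real set" where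
  "part m \<alpha> n k j = {x \<in> gen_field m \<alpha>. 0 < x \<and> inC n j (lg m \<alpha> 0 x + real k * lg m \<alpha> 1 x) (lg m \<alpha> 1 x)}"

definition mk :: "(nat \<Rightarrow> real) \<Rightarrow> nat \<Rightarrow> nat \<Rightarrow> nat \<Rightarrow> real" where
  "mk \<alpha> i1 i2 i3 = (\<alpha> 1 * \<alpha> 1) ^ i1 * (\<alpha> 0 * \<alpha> 0) ^ i2 * inverse ((\<alpha> 0 * \<alpha> 0) ^ i3)"

context
  fixes m :: nat and \<alpha> :: "nat \<Rightarrow> real"
  assumes ai: "alg_indep_Q m \<alpha>" and m2: "2 \<le> m"
begin

lemma mk_props:
  "mk \<alpha> i1 i2 i3 \<in> gen_field m \<alpha>" "0 < mk \<alpha> i1 i2 i3"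
  "lg m \<alpha> 0 (mk \<alpha> i1 i2 i3) = real i2 - real i3" "lg m \<alpha> 1 (mk \<alpha> i1 i2 i3) = real i1"
proof -
  have i0: "0 < m" "1 < m" using m2 by auto
  define g0 where "g0 = \<alpha> 0 * \<alpha> 0"
  define g1 where "g1 = \<alpha> 1 * \<alpha> 1"
  have g0: "g0 \<in> gen_field m \<alpha>" "0 < g0"
    using gf_mult[OF gen_field_var[OF i0(1)] gen_field_var[OF i0(1)]] alpha_nz[OF ai i0(1)]
    by (auto simp: g0_def) (metis not_real_square_gt_zero)
  have g1: "g1 \<in> gen_field m \<alpha>" "0 < g1"
    using gf_mult[OF gen_field_var[OF i0(2)] gen_field_var[OF i0(2)]] alpha_nz[OF ai i0(2)]
    by (auto simp: g1_def) (metis not_real_square_gt_zero)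
  have nz: "g0 \<noteq> 0" "g1 \<noteq> 0" using g0 g1 by auto
  have l0: "lg m \<alpha> 0 g0 = 1" "lg m \<alpha> 1 g0 = 0" "lg m \<alpha> 0 g1 = 0" "lg m \<alpha> 1 g1 = 1"
    using lg_sq[OF ai i0(1)] lg_sq[OF ai i0(2)] by (auto simp: g0_def g1_def)
  have A: "g1 ^ i1 \<in> gen_field m \<alpha>" "0 < g1 ^ i1" using g1 gf_pow by auto
  have B: "g0 ^ i2 \<in> gen_field m \<alpha>" "0 < g0 ^ i2" using g0 gf_pow by auto
  have C: "inverse (g0 ^ i3) \<in> gen_field m \<alpha>" "0 < inverse (g0 ^ i3)" using g0 gf_pow gf_inv by auto
  have AB: "g1 ^ i1 * g0 ^ i2 \<in> gen_field m \<alpha>" "0 < g1 ^ i1 * g0 ^ i2" using A B gf_mult by auto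
  have eq: "mk \<alpha> i1 i2 i3 = g1 ^ i1 * g0 ^ i2 * inverse (g0 ^ i3)" by (simp add: mk_def g0_def g1_def)
  show "mk \<alpha> i1 i2 i3 \<in> gen_field m \<alpha>" using eq AB C gf_mult by auto
  show "0 < mk \<alpha> i1 i2 i3" using eq AB C by auto
  have "\<And>j. lg m \<alpha> j (mk \<alpha> i1 i2 i3) = real i1 * lg m \<alpha> j g1 + real i2 * lg m \<alpha> j g0 - real i3 * lg m \<alpha> j g0"
  proof -
    fix j
    have "lg m \<alpha> j (mk \<alpha> i1 i2 i3) = lg m \<alpha> j (g1 ^ i1 * g0 ^ i2) + lg m \<alpha> j (inverse (g0 ^ i3))"
      unfolding eq using lg_mult[OF ai AB(1) C(1)] AB C by (simp add: nz)
    also have "\<dots> = lg m \<alpha> j (g1 ^ i1) + lg m \<alpha> j (g0 ^ i2) - lg m \<alpha> j (g0 ^ i3)"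
      using lg_mult[OF ai A(1) B(1)] A B lg_inv[OF ai gf_pow[OF g0(1)]] g0 nz by simp
    also have "\<dots> = real i1 * lg m \<alpha> j g1 + real i2 * lg m \<alpha> j g0 - real i3 * lg m \<alpha> j g0"
      using lg_pow[OF ai] g0 g1 nz by simp
    finally show "lg m \<alpha> j (mk \<alpha> i1 i2 i3) = real i1 * lg m \<alpha> j g1 + real i2 * lg m \<alpha> j g0 - real i3 * lg m \<alpha> j g0" .
  qed
  then show "lg m \<alpha> 0 (mk \<alpha> i1 i2 i3) = real i2 - real i3" "lg m \<alpha> 1 (mk \<alpha> i1 i2 i3) = real i1"
    using l0 by auto
qed

lemma part_closed:
  assumes x: "x \<in> part m \<alpha> n k j" and y: "y \<in> part m \<alpha> n k j"
  shows "x + y \<in> part m \<alpha> n k j" "x * y \<in> part m \<alpha> n k j"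
proof -
  have xK: "x \<in> gen_field m \<alpha>" "0 < x" and yK: "y \<in> gen_field m \<alpha>" "0 < y" using x y by (auto simp: part_def)
  define a where "a = (\<lambda>z. lg m \<alpha> 0 z + real k * lg m \<alpha> 1 z)"
  define b where "b = (\<lambda>z. lg m \<alpha> 1 z)"
  have cx: "inC n j (a x) (b x)" and cy: "inC n j (a y) (b y)" using x y by (auto simp: part_def a_def b_def)
  have am: "a (x * y) = 1 * a x + 1 * a y" "b (x * y) = 1 * b x + 1 * b y"
    using lg_mult[OF ai xK(1) yK(1)] xK yK by (auto simp: a_def b_def algebra_simps)
  have "inC n j (a (x * y)) (b (x * y))" unfolding am by (rule inC_comb[OF cx cy]) auto
  then show "x * y \<in> part m \<alpha> n k j" using xK yK gf_mult
    by (auto simp: part_def a_def b_def)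
  define s where "s = x / (x + y)"
  define t where "t = y / (x + y)"
  have st: "0 < s" "0 < t" using xK yK by (auto simp: s_def t_def)
  have aa: "a (x + y) = s * a x + t * a y" "b (x + y) = s * b x + t * b y"
    using lg_add[OF ai xK(1) yK(1) xK(2) yK(2)] by (auto simp: a_def b_def s_def t_def algebra_simps)
  have "inC n j (a (x + y)) (b (x + y))" unfolding aa by (rule inC_comb[OF cx cy st])
  then show "x + y \<in> part m \<alpha> n k j" using xK yK gf_add
    by (auto simp: part_def a_def b_def)
qed

lemma part_nonempty:
  assumes j: "j < n"
  shows "\<exists>x. x \<in> part m \<alpha> n k j"
proof (cases "j = 0")
  case True
  have "inC n 0 (-1) 0" by (simp add: inC_def)
  then show ?thesis using mk_props[of 0 0 1] True by (intro exI[of _ "mk \<alpha> 0 0 1"]) (auto simp: part_def)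
next
  case False
  define i1 where "i1 = 2 * j - 1"
  have ri1: "real i1 = 2 * real j - 1" using False by (auto simp: i1_def of_nat_diff)
  have "inC n j 2 (real i1)" using False j ri1 by (auto simp: inC_def algebra_simps)
  moreover have "lg m \<alpha> 0 (mk \<alpha> i1 2 (k * i1)) + real k * lg m \<alpha> 1 (mk \<alpha> i1 2 (k * i1)) = 2"
    using mk_props by simp
  ultimately show ?thesis using mk_props[of i1 2 "k * i1"]
    by (intro exI[of _ "mk \<alpha> i1 2 (k * i1)"]) (auto simp: part_def)
qed

lemma part_disj:
  assumes "j < n" "j' < n" "x \<in> part m \<alpha> n k j" "x \<in> part m \<alpha> n k j'"
  shows "j = j'"
  using assms inC_unique by (auto simp: part_def)

lemma part_cover:
  assumes "2 \<le> n" "x \<in> gen_field m \<alpha>" "0 < x"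
  shows "\<exists>j<n. x \<in> part m \<alpha> n k j"
  using assms inC_exists[OF assms(1)] by (auto simp: part_def)

lemma in_partitions:
  assumes n: "2 \<le> n"
  shows "part m \<alpha> n k ` {..<n} \<in> semiring_partitions n {x \<in> gen_field m \<alpha>. x > 0}"
proof -
  have inj: "inj_on (part m \<alpha> n k) {..<n}"
  proof (rule inj_onI)
    fix j j' assume jj: "j \<in> {..<n}" "j' \<in> {..<n}" "part m \<alpha> n k j = part m \<alpha> n k j'"
    have "j < n" using jj by simp
    then obtain x where x1: "x \<in> part m \<alpha> n k j" using part_nonempty[where j=j and n=n and k=k] by blast
    then have x2: "x \<in> part m \<alpha> n k j'" using jj(3) by simp
    show "j = j'" using part_disj[OF _ _ x1 x2] jj by simp
  qed
  have card: "card (part m \<alpha> n k ` {..<n}) = n" using card_image[OF inj] by simp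
  have un: "\<Union>(part m \<alpha> n k ` {..<n}) = {x \<in> gen_field m \<alpha>. x > 0}"
  proof
    show "\<Union>(part m \<alpha> n k ` {..<n}) \<subseteq> {x \<in> gen_field m \<alpha>. x > 0}" by (auto simp: part_def)
    show "{x \<in> gen_field m \<alpha>. x > 0} \<subseteq> \<Union>(part m \<alpha> n k ` {..<n})"
      using part_cover[OF n] by blast
  qed
  have ne: "\<forall>A\<in>part m \<alpha> n k ` {..<n}. A \<noteq> {} \<and> closed_add_mult A"
  proof
    fix A assume "A \<in> part m \<alpha> n k ` {..<n}"
    then obtain j where j: "j < n" "A = part m \<alpha> n k j" by auto
    have "A \<noteq> {}" using part_nonempty[where j=j and n=n and k=k] j by auto
    moreover have "closed_add_mult A" unfolding closed_add_mult_def j(2)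
      using part_closed[where n=n and k=k and j=j] by blast
    ultimately show "A \<noteq> {} \<and> closed_add_mult A" by simp
  qed
  have dj: "\<forall>A\<in>part m \<alpha> n k ` {..<n}. \<forall>B\<in>part m \<alpha> n k ` {..<n}. A \<noteq> B \<longrightarrow> A \<inter> B = {}"
  proof (intro ballI impI)
    fix A B assume "A \<in> part m \<alpha> n k ` {..<n}" "B \<in> part m \<alpha> n k ` {..<n}" and AB: "A \<noteq> B"
    then obtain j j' where j: "j < n" "A = part m \<alpha> n k j" "j' < n" "B = part m \<alpha> n k j'" by auto
    show "A \<inter> B = {}"
    proof (rule ccontr)
      assume "A \<inter> B \<noteq> {}"
      then obtain x where "x \<in> part m \<alpha> n k j" "x \<in> part m \<alpha> n k j'" using j by auto
      then have "j = j'" using part_disj[OF j(1) j(3)] by simp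
      then show False using AB j by simp
    qed
  qed
  show ?thesis unfolding semiring_partitions_def using card un ne dj by auto
qed

lemma one_part: "1 \<in> part m \<alpha> n k 0"
  using mk_props[of 0 0 0] by (simp add: part_def mk_def inC_def)

lemma distinct_partitions:
  assumes n: "2 \<le> n" and kk: "k < k'"
  shows "part m \<alpha> n k ` {..<n} \<noteq> part m \<alpha> n k' ` {..<n}"
proof
  assume eq: "part m \<alpha> n k ` {..<n} = part m \<alpha> n k' ` {..<n}"
  have "part m \<alpha> n k 0 \<in> part m \<alpha> n k ` {..<n}" using n by auto
  then have "part m \<alpha> n k 0 \<in> part m \<alpha> n k' ` {..<n}" using eq by simp
  then obtain j where j: "j < n" "part m \<alpha> n k 0 = part m \<alpha> n k' j" by auto
  have "1 \<in> part m \<alpha> n k' j" using one_part j by auto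
  then have j0: "j = 0" using part_disj[OF j(1) _ _ one_part] n by auto
  define z where "z = mk \<alpha> 1 0 k'"
  have zl: "lg m \<alpha> 0 z = - real k'" "lg m \<alpha> 1 z = 1" using mk_props by (auto simp: z_def)
  have "z \<in> part m \<alpha> n k 0" using mk_props[of 1 0 k'] zl kk by (auto simp: part_def z_def inC_def)
  then have "z \<in> part m \<alpha> n k' 0" using j j0 by simp
  then show False using zl by (auto simp: part_def inC_def)
qed

end

theorem proposition2p3:
  fixes m :: nat and \<alpha> :: "nat \<Rightarrow> real"
  assumes "m \<ge> 2" and "alg_indep_Q m \<alpha>"
  shows "\<forall>n::nat. n \<ge> 2 \<longrightarrow>
           infinite (semiring_partitions n {x \<in> gen_field m \<alpha>. x > 0})"
proof (intro allI impI)
  fix n :: nat assume n: "n \<ge> 2"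
  let ?f = "\<lambda>k. part m \<alpha> n k ` {..<n}"
  have inj: "inj ?f"
  proof (rule injI)
    fix k k' assume "?f k = ?f k'"
    then show "k = k'" using distinct_partitions[OF assms(2,1) n] by (metis linorder_neq_iff)
  qed
  have "infinite (range ?f)" using finite_imageD[OF _ inj] by auto
  moreover have "range ?f \<subseteq> semiring_partitions n {x \<in> gen_field m \<alpha>. x > 0}"
    using in_partitions[OF assms(2,1) n] by auto
  ultimately show "infinite (semiring_partitions n {x \<in> gen_field m \<alpha>. x > 0})"
    using infinite_super by blast
qed

end
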